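(* Let $X$ be a planar Peano continuum and $x_0\in X$. If $x\in X$ is a wedge point for both of the pseudo-Hawaiian earring subgroups $H_1$ and $H_2$ of $\pi_1(X,x_0)$, then $H_1\sim H_2$.
   Context: $\mathbf E$ is the Hawaiian earring (union of circles centered at $(0,1/n)$ of radius $1/n$ in $\mathbb R^2$, basepoint $0$), $\mathbb H=\pi_1(\mathbf E,0)$. For a path $\alpha$, $\hat\alpha([g])=[\overline\alpha*g*\alpha]$. A pseudo-Hawaiian earring subgroup of $\pi_1(X,x_0)$ is a subgroup which is an uncountable homomorphic image of $\mathbb H$. A point $x$ is a wedge point of such $H$ if there exist a surjective homomorphism $\psi:\mathbb H\to H$, a continuous $f:(\mathbf E,0)\to(X,x)$ and a path $\alpha$ from $x$ to $x_0$ with $\psi=\hat\alpha\circ f_*$. $H_1\sim H_2$ means there exist $g\in\pi_1(X,x_0)$ and a pseudo-Hawaiian earring subgroup $H$ of $\pi_1(X,x_0)$ with $H_1\subset H$ and $gH_2g^{-1}\subset H$. *)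

theory Defs
  imports "HOL-Analysis.Analysis" "HOL-Algebra.Group"
begin

definition loops :: "'a::topological_space set \<Rightarrow> 'a \<Rightarrow> (real \<Rightarrow> 'a) set" where
  "loops X x0 = {g. path g \<and> path_image g \<subseteq> X \<and> pathstart g = x0 \<and> pathfinish g = x0}"

definition path_class :: "'a::topological_space set \<Rightarrow> (real \<Rightarrow> 'a) \<Rightarrow> (real \<Rightarrow> 'a) set" where
  "path_class X g = {h. homotopic_paths X g h}"

definition rep :: "(real \<Rightarrow> 'a) set \<Rightarrow> real \<Rightarrow> 'a" where
  "rep A = (SOME g. g \<in> A)"

definition fundamental_group :: "'a::topological_space set \<Rightarrow> 'a \<Rightarrow> ((real \<Rightarrow> 'a) set) monoid" where
  "fundamental_group X x0 =
     \<lparr> carrier = path_class X ` loops X x0,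
       mult = (\<lambda>A B. path_class X (rep A +++ rep B)),
       one = path_class X (\<lambda>t. x0) \<rparr>"

definition induced_map :: "'b::topological_space set \<Rightarrow> ('a::topological_space \<Rightarrow> 'b)
    \<Rightarrow> (real \<Rightarrow> 'a) set \<Rightarrow> (real \<Rightarrow> 'b) set" where
  "induced_map Y f A = path_class Y (f \<circ> rep A)"

definition basepoint_change :: "'a::topological_space set \<Rightarrow> (real \<Rightarrow> 'a)
    \<Rightarrow> (real \<Rightarrow> 'a) set \<Rightarrow> (real \<Rightarrow> 'a) set" where
  "basepoint_change X \<alpha> A = path_class X (reversepath \<alpha> +++ rep A +++ \<alpha>)"

definition hawaiian_earring :: "complex set" where
  "hawaiian_earring = (\<Union>n\<in>{1::nat..}. sphere (\<i> * complex_of_real (1 / real n)) (1 / real n))"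

abbreviation HE_group :: "((real \<Rightarrow> complex) set) monoid" where
  "HE_group \<equiv> fundamental_group hawaiian_earring 0"

definition pseudo_HE_subgroup :: "complex set \<Rightarrow> complex \<Rightarrow> (real \<Rightarrow> complex) set set \<Rightarrow> bool" where
  "pseudo_HE_subgroup X x0 H \<longleftrightarrow>
     subgroup H (fundamental_group X x0) \<and> uncountable H \<and>
     (\<exists>\<psi>. \<psi> \<in> hom HE_group (fundamental_group X x0) \<and> \<psi> ` carrier HE_group = H)"

definition wedge_point :: "complex set \<Rightarrow> complex \<Rightarrow> (real \<Rightarrow> complex) set set \<Rightarrow> complex \<Rightarrow> bool" where
  "wedge_point X x0 H x \<longleftrightarrow>
     (\<exists>\<psi> f \<alpha>. \<psi> \<in> hom HE_group (fundamental_group X x0) \<and> \<psi> ` carrier HE_group = H \<and>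
        continuous_on hawaiian_earring f \<and> f ` hawaiian_earring \<subseteq> X \<and> f 0 = x \<and>
        path \<alpha> \<and> path_image \<alpha> \<subseteq> X \<and> pathstart \<alpha> = x \<and> pathfinish \<alpha> = x0 \<and>
        (\<forall>c\<in>carrier HE_group. \<psi> c = basepoint_change X \<alpha> (induced_map X f c)))"

definition HE_equiv :: "complex set \<Rightarrow> complex \<Rightarrow> (real \<Rightarrow> complex) set set
    \<Rightarrow> (real \<Rightarrow> complex) set set \<Rightarrow> bool" where
  "HE_equiv X x0 H1 H2 \<longleftrightarrow>
     (\<exists>g\<in>carrier (fundamental_group X x0). \<exists>H. pseudo_HE_subgroup X x0 H \<and> H1 \<subseteq> H \<and>
        (\<lambda>h. g \<otimes>\<^bsub>fundamental_group X x0\<^esub> h \<otimes>\<^bsub>fundamental_group X x0\<^esub>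
              inv\<^bsub>fundamental_group X x0\<^esub> g) ` H2 \<subseteq> H)"

definition planar_peano_continuum :: "complex set \<Rightarrow> bool" where
  "planar_peano_continuum X \<longleftrightarrow> X \<noteq> {} \<and> compact X \<and> connected X \<and> locally connected X"

end

theory Submission
  imports Defs
begin


definition PP :: "'a::real_normed_vector set \<Rightarrow> 'a \<Rightarrow> 'a \<Rightarrow> (real \<Rightarrow> 'a) \<Rightarrow> bool" where
  "PP X a b p \<longleftrightarrow> path p \<and> path_image p \<subseteq> X \<and> pathstart p = a \<and> pathfinish p = b"

lemma PP_join: "PP X a b p \<Longrightarrow> PP X b c q \<Longrightarrow> PP X a c (p +++ q)"
  unfolding PP_def by (auto simp: path_image_join)

lemma PP_rev: "PP X a b p \<Longrightarrow> PP X b a (reversepath p)"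
  unfolding PP_def by auto

lemma PP_const: "a \<in> X \<Longrightarrow> PP X a a (linepath a a)"
  unfolding PP_def by auto

lemma hp_PP: "homotopic_paths X p q \<Longrightarrow> PP X a b p \<Longrightarrow> PP X a b q"
  unfolding PP_def using homotopic_paths_imp_path homotopic_paths_imp_subset
    homotopic_paths_imp_pathstart homotopic_paths_imp_pathfinish by metis

lemma PP_const': "PP X a b p \<Longrightarrow> PP X a a (linepath a a)"
  unfolding PP_def by (auto simp: path_image_def pathstart_def)

lemma hp_refl: "PP X a b p \<Longrightarrow> homotopic_paths X p p"
  unfolding PP_def by simp

lemma hp_assoc: "PP X a b p \<Longrightarrow> PP X b c q \<Longrightarrow> PP X c d r \<Longrightarrow>
   homotopic_paths X (p +++ (q +++ r)) ((p +++ q) +++ r)"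
  unfolding PP_def by (intro homotopic_paths_assoc) auto

lemma hp_assoc': "PP X a b p \<Longrightarrow> PP X b c q \<Longrightarrow> PP X c d r \<Longrightarrow>
   homotopic_paths X ((p +++ q) +++ r) (p +++ (q +++ r))"
  using hp_assoc homotopic_paths_sym by metis

lemma hp_lid: "PP X a b p \<Longrightarrow> homotopic_paths X (linepath a a +++ p) p"
  unfolding PP_def by (intro homotopic_paths_lid') auto

lemma hp_rid: "PP X a b p \<Longrightarrow> homotopic_paths X (p +++ linepath b b) p"
  unfolding PP_def by (intro homotopic_paths_rid') auto

lemma hp_rinv: "PP X a b p \<Longrightarrow> homotopic_paths X (p +++ reversepath p) (linepath a a)"
  unfolding PP_def using homotopic_paths_rinv by metis

lemma hp_linv: "PP X a b p \<Longrightarrow> homotopic_paths X (reversepath p +++ p) (linepath b b)"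
  unfolding PP_def using homotopic_paths_linv by metis

lemma hp_join: "homotopic_paths X p p' \<Longrightarrow> homotopic_paths X q q' \<Longrightarrow> PP X a b p \<Longrightarrow>
    PP X b c q \<Longrightarrow> homotopic_paths X (p +++ q) (p' +++ q')"
  unfolding PP_def by (intro homotopic_paths_join) auto

lemmas hp_trans = homotopic_paths_trans
lemmas hp_sym = homotopic_paths_sym

lemma loops_PP: "g \<in> loops X x0 \<longleftrightarrow> PP X x0 x0 g"
  unfolding loops_def PP_def by auto

lemma cls_eq: "homotopic_paths X g h \<Longrightarrow> path_class X g = path_class X h"
  unfolding path_class_def using hp_trans hp_sym by blast

lemma rep_hp: "PP X a b g \<Longrightarrow> homotopic_paths X g (rep (path_class X g))"
proof -
  assume "PP X a b g"
  then have "g \<in> path_class X g" unfolding path_class_def PP_def by simp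
  then have "rep (path_class X g) \<in> path_class X g" unfolding rep_def by (metis someI)
  then show ?thesis unfolding path_class_def by simp
qed

lemma rep_PP: "PP X a b g \<Longrightarrow> PP X a b (rep (path_class X g))"
  using rep_hp hp_PP by metis

lemma carrier_fg: "carrier (fundamental_group X x0) = path_class X ` {g. PP X x0 x0 g}"
  unfolding fundamental_group_def using loops_PP by (auto simp: image_def)

lemma mult_fg: "PP X x0 x0 g \<Longrightarrow> PP X x0 x0 h \<Longrightarrow>
   path_class X g \<otimes>\<^bsub>fundamental_group X x0\<^esub> path_class X h = path_class X (g +++ h)"
  unfolding fundamental_group_def apply simp
  apply (rule cls_eq) apply (rule hp_sym)
  apply (rule hp_join[OF rep_hp rep_hp]) apply assumption+
  done

lemma one_fg: fixes X :: "'a::real_normed_vector set" shows "\<one>\<^bsub>fundamental_group X x0\<^esub> = path_class X (linepath x0 x0)"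
proof -
  have "linepath x0 x0 = (\<lambda>t. x0)" by (rule ext) (simp add: linepath_def algebra_simps)
  then show ?thesis unfolding fundamental_group_def by simp
qed

lemma group_fg: fixes X :: "'a::real_normed_vector set" assumes "x0 \<in> X" shows "group (fundamental_group X x0)"
proof (rule groupI)
  let ?G = "fundamental_group X x0"
  note C = carrier_fg[of X x0]
  show "\<one>\<^bsub>?G\<^esub> \<in> carrier ?G" unfolding one_fg C using PP_const[OF assms] by blast
  fix x y assume "x \<in> carrier ?G" "y \<in> carrier ?G"
  then obtain g h where "PP X x0 x0 g" "PP X x0 x0 h" "x = path_class X g" "y = path_class X h"
    unfolding C by blast
  then show "x \<otimes>\<^bsub>?G\<^esub> y \<in> carrier ?G" unfolding C using mult_fg PP_join by blast
next
  let ?G = "fundamental_group X x0"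
  note C = carrier_fg[of X x0]
  fix x y z assume "x \<in> carrier ?G" "y \<in> carrier ?G" "z \<in> carrier ?G"
  then obtain g h k where g: "PP X x0 x0 g" and h: "PP X x0 x0 h" and k: "PP X x0 x0 k"
    and "x = path_class X g" "y = path_class X h" "z = path_class X k"
    unfolding C by blast
  then show "x \<otimes>\<^bsub>?G\<^esub> y \<otimes>\<^bsub>?G\<^esub> z = x \<otimes>\<^bsub>?G\<^esub> (y \<otimes>\<^bsub>?G\<^esub> z)"
  proof -
    have "x \<otimes>\<^bsub>?G\<^esub> y \<otimes>\<^bsub>?G\<^esub> z = path_class X ((g +++ h) +++ k)"
      using g h k \<open>x = _\<close> \<open>y = _\<close> \<open>z = _\<close> by (simp add: mult_fg PP_join)
    also have "\<dots> = path_class X (g +++ (h +++ k))" by (rule cls_eq[OF hp_assoc'[OF g h k]])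
    also have "\<dots> = x \<otimes>\<^bsub>?G\<^esub> (y \<otimes>\<^bsub>?G\<^esub> z)"
      using g h k \<open>x = _\<close> \<open>y = _\<close> \<open>z = _\<close> by (simp add: mult_fg PP_join)
    finally show ?thesis .
  qed
next
  let ?G = "fundamental_group X x0"
  note C = carrier_fg[of X x0]
  fix x assume "x \<in> carrier ?G"
  then obtain g where g: "PP X x0 x0 g" and "x = path_class X g" unfolding C by blast
  have c: "PP X x0 x0 (linepath x0 x0)" using PP_const[OF assms] .
  show "\<one>\<^bsub>?G\<^esub> \<otimes>\<^bsub>?G\<^esub> x = x"
    unfolding one_fg \<open>x = _\<close> mult_fg[OF c g] by (rule cls_eq[OF hp_lid[OF g]])
  have r: "PP X x0 x0 (reversepath g)" using g PP_rev by blast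
  have "path_class X (reversepath g) \<otimes>\<^bsub>?G\<^esub> x = \<one>\<^bsub>?G\<^esub>"
    unfolding one_fg \<open>x = _\<close> mult_fg[OF r g] by (rule cls_eq[OF hp_linv[OF g]])
  moreover have "path_class X (reversepath g) \<in> carrier ?G" unfolding C using r by blast
  ultimately show "\<exists>y\<in>carrier ?G. y \<otimes>\<^bsub>?G\<^esub> x = \<one>\<^bsub>?G\<^esub>" by blast
qed

lemma hp_cancel:
  assumes m: "PP X u v m" and n: "PP X v w n" and k: "PP X w v k" and r: "PP X v z r"
    and h: "homotopic_paths X (n +++ k) (linepath v v)"
  shows "homotopic_paths X ((m +++ n) +++ (k +++ r)) (m +++ r)"
proof -
  have kr: "PP X w z (k +++ r)" using k r PP_join by blast
  have nk: "PP X v v (n +++ k)" using k n PP_join by blast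
  have "homotopic_paths X ((m +++ n) +++ (k +++ r)) (m +++ (n +++ (k +++ r)))"
    by (rule hp_assoc'[OF m n kr])
  also have "homotopic_paths X \<dots> (m +++ ((n +++ k) +++ r))"
    by (rule hp_join[OF hp_refl[OF m] hp_assoc[OF n k r] m PP_join[OF n kr]])
  also have "homotopic_paths X \<dots> (m +++ (linepath v v +++ r))"
    by (rule hp_join[OF hp_refl[OF m] hp_join[OF h hp_refl[OF r] nk r] m PP_join[OF nk r]])
  also have "homotopic_paths X \<dots> (m +++ r)"
    by (rule hp_join[OF hp_refl[OF m] hp_lid[OF r] m PP_join[OF PP_const'[OF r] r]])
  finally show ?thesis .
qed

lemma hp_hom:
  assumes a: "PP X x0 x a" and b: "PP X x x0 b" and p: "PP X x x p" and q: "PP X x x q"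
    and h: "homotopic_paths X (b +++ a) (linepath x x)"
  shows "homotopic_paths X ((a +++ (p +++ b)) +++ (a +++ (q +++ b))) (a +++ ((p +++ q) +++ b))"
proof -
  have ap: "PP X x0 x (a +++ p)" using a p PP_join by blast
  have qb: "PP X x x0 (q +++ b)" using q b PP_join by blast
  have "homotopic_paths X ((a +++ (p +++ b)) +++ (a +++ (q +++ b))) (((a +++ p) +++ b) +++ (a +++ (q +++ b)))"
    by (rule hp_join[OF hp_assoc[OF a p b] hp_refl[OF PP_join[OF a qb]]]) (auto intro!: PP_join a b p q)
  also have "homotopic_paths X \<dots> ((a +++ p) +++ (q +++ b))"
    by (rule hp_cancel[OF ap b a qb h])
  also have "homotopic_paths X \<dots> (a +++ (p +++ (q +++ b)))"
    by (rule hp_assoc'[OF a p qb])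
  also have "homotopic_paths X \<dots> (a +++ ((p +++ q) +++ b))"
    by (rule hp_join[OF hp_refl[OF a] hp_assoc[OF p q b] a]) (auto intro!: PP_join p q b)
  finally show ?thesis .
qed

lemma hp_conj:
  assumes a: "PP X x0 x a" and b: "PP X x x0 b" and c: "PP X x0 x c" and d: "PP X x x0 d"
    and p: "PP X x x p"
    and hbc: "homotopic_paths X (b +++ c) (linepath x x)"
    and hda: "homotopic_paths X (d +++ a) (linepath x x)"
  shows "homotopic_paths X (((a +++ b) +++ (c +++ (p +++ b))) +++ (c +++ d)) (a +++ (p +++ d))"
proof -
  have pb: "PP X x x0 (p +++ b)" using p b PP_join by blast
  have ap: "PP X x0 x (a +++ p)" using a p PP_join by blast
  have "homotopic_paths X (((a +++ b) +++ (c +++ (p +++ b))) +++ (c +++ d)) ((a +++ (p +++ b)) +++ (c +++ d))"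
    by (rule hp_join[OF hp_cancel[OF a b c pb hbc] hp_refl[OF PP_join[OF c d]]])
       (auto intro!: PP_join a b c d p)
  also have "homotopic_paths X \<dots> (((a +++ p) +++ b) +++ (c +++ d))"
    by (rule hp_join[OF hp_assoc[OF a p b] hp_refl[OF PP_join[OF c d]]]) (auto intro!: PP_join a b c d p pb)
  also have "homotopic_paths X \<dots> ((a +++ p) +++ d)"
    by (rule hp_cancel[OF ap b c d hbc])
  also have "homotopic_paths X \<dots> (a +++ (p +++ d))"
    by (rule hp_assoc'[OF a p d])
  finally show ?thesis .
qed

lemma PP_comp: "PP E a b g \<Longrightarrow> continuous_on E f \<Longrightarrow> f ` E \<subseteq> X \<Longrightarrow> PP X (f a) (f b) (f \<circ> g)"
  unfolding PP_def
  by (auto simp: path_image_compose pathstart_compose pathfinish_compose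
      intro: path_continuous_image continuous_on_subset)

lemma hp_comp: "homotopic_paths E g h \<Longrightarrow> continuous_on E f \<Longrightarrow> f ` E \<subseteq> X \<Longrightarrow>
   homotopic_paths X (f \<circ> g) (f \<circ> h)"
  by (rule homotopic_paths_continuous_image) auto

lemma psi_cls:
  assumes f: "continuous_on E f" "f ` E \<subseteq> X" and g: "PP E e e g" and al: "PP X (f e) x0 \<alpha>"
  shows "basepoint_change X \<alpha> (induced_map X f (path_class E g))
         = path_class X (reversepath \<alpha> +++ ((f \<circ> g) +++ \<alpha>))"
proof -
  have fg: "PP X (f e) (f e) (f \<circ> g)" using PP_comp[OF g f] .
  have "induced_map X f (path_class E g) = path_class X (f \<circ> g)"
    unfolding induced_map_def
    by (rule cls_eq[OF hp_sym[OF hp_comp[OF rep_hp[OF g] f]]])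
  then show ?thesis unfolding basepoint_change_def
    apply simp
    apply (rule cls_eq)
    apply (rule hp_join[OF hp_refl[OF PP_rev[OF al]] _ PP_rev[OF al]])
     apply (rule hp_join[OF hp_sym[OF rep_hp[OF fg]] hp_refl[OF al]])
      apply (rule rep_PP[OF fg])
     apply (rule al)
    apply (rule PP_join[OF rep_PP[OF fg] al])
    done
qed

lemma psi_hom:
  fixes E X :: "'a::real_normed_vector set"
  assumes e: "e \<in> E" and f: "continuous_on E f" "f ` E \<subseteq> X" and al: "PP X (f e) x0 \<alpha>"
  shows "(\<lambda>c. basepoint_change X \<alpha> (induced_map X f c)) \<in> hom (fundamental_group E e) (fundamental_group X x0)"
proof -
  let ?a = "reversepath \<alpha>"
  have a: "PP X x0 (f e) ?a" using PP_rev[OF al] .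
  have h: "homotopic_paths X (\<alpha> +++ ?a) (linepath (f e) (f e))" using hp_rinv[OF al] .
  have inG: "path_class X (?a +++ ((f \<circ> g) +++ \<alpha>)) \<in> carrier (fundamental_group X x0)"
    if g: "PP E e e g" for g
    unfolding carrier_fg using PP_join[OF a PP_join[OF PP_comp[OF g f] al]] by blast
  show ?thesis
  proof (rule homI)
    fix c assume "c \<in> carrier (fundamental_group E e)"
    then obtain g where g: "PP E e e g" and c: "c = path_class E g" unfolding carrier_fg by blast
    show "basepoint_change X \<alpha> (induced_map X f c) \<in> carrier (fundamental_group X x0)"
      unfolding c psi_cls[OF f g al] by (rule inG[OF g])
  next
    fix c d assume "c \<in> carrier (fundamental_group E e)" "d \<in> carrier (fundamental_group E e)"
    then obtain g k where g: "PP E e e g" and c: "c = path_class E g"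
      and k: "PP E e e k" and d: "d = path_class E k" unfolding carrier_fg by blast
    have fg: "PP X (f e) (f e) (f \<circ> g)" using PP_comp[OF g f] .
    have fk: "PP X (f e) (f e) (f \<circ> k)" using PP_comp[OF k f] .
    show "basepoint_change X \<alpha> (induced_map X f (c \<otimes>\<^bsub>fundamental_group E e\<^esub> d)) =
       basepoint_change X \<alpha> (induced_map X f c) \<otimes>\<^bsub>fundamental_group X x0\<^esub>
       basepoint_change X \<alpha> (induced_map X f d)"
      unfolding c d mult_fg[OF g k] psi_cls[OF f g al] psi_cls[OF f k al] psi_cls[OF f PP_join[OF g k] al]
      apply (subst mult_fg)
        apply (rule PP_join[OF a PP_join[OF fg al]])
       apply (rule PP_join[OF a PP_join[OF fk al]])
      apply (rule cls_eq)
      apply (rule hp_sym)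
      unfolding path_compose_join
      by (rule hp_hom[OF a al fg fk h])
  qed
qed



definition Q :: "real \<Rightarrow> complex \<Rightarrow> bool" where
  "Q r z \<longleftrightarrow> (Re z)\<^sup>2 + (Im z)\<^sup>2 = 2 * Im z / r"

definition Nf :: "complex \<Rightarrow> real" where
  "Nf z = 2 * Im z / ((Re z)\<^sup>2 + (Im z)\<^sup>2)"

lemma sphere_Q:
  assumes "r > 0"
  shows "z \<in> sphere (\<i> * complex_of_real r) r \<longleftrightarrow> Q (1/r) z"
proof -
  have "z \<in> sphere (\<i> * complex_of_real r) r \<longleftrightarrow> cmod (\<i> * complex_of_real r - z) = r"
    by (simp add: dist_norm)
  also have "\<dots> \<longleftrightarrow> (cmod (\<i> * complex_of_real r - z))\<^sup>2 = r\<^sup>2"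
    using assms by (smt (verit) norm_ge_zero power2_eq_imp_eq)
  also have "\<dots> \<longleftrightarrow> (Re z)\<^sup>2 + (r - Im z)\<^sup>2 = r\<^sup>2"
    unfolding cmod_power2 by simp
  also have "\<dots> \<longleftrightarrow> Q (1/r) z"
    unfolding Q_def using assms by (simp add: power2_eq_square field_simps)
  finally show ?thesis .
qed

lemma E_iff: "z \<in> hawaiian_earring \<longleftrightarrow> (\<exists>n::nat. n \<ge> 1 \<and> Q (real n) z)"
  unfolding hawaiian_earring_def using sphere_Q[of "1/real _"] by auto

lemma Q_Nf: "Q r z \<Longrightarrow> z \<noteq> 0 \<Longrightarrow> r \<noteq> 0 \<Longrightarrow> Nf z = r"
proof -
  assume q: "Q r z" and z: "z \<noteq> 0" and r: "r \<noteq> 0"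
  have pos: "(Re z)\<^sup>2 + (Im z)\<^sup>2 \<noteq> 0" using z complex_eq_iff by (auto simp: power2_eq_square)
  then have "Im z \<noteq> 0" using q unfolding Q_def by auto
  then show ?thesis using q r unfolding Q_def Nf_def by (simp add: field_simps)
qed

lemma Q_scale: "Q r z \<Longrightarrow> t > 0 \<Longrightarrow> Q (r / t) (z * complex_of_real t)"
proof -
  assume q: "Q r z" and t: "t > 0"
  have "t*t*((Re z)\<^sup>2 + (Im z)\<^sup>2) = t*t*(2 * Im z / r)" using q unfolding Q_def by simp
  then show ?thesis unfolding Q_def using t by (simp add: power2_eq_square algebra_simps)
qed

lemma E_Nf: assumes "z \<in> hawaiian_earring" "z \<noteq> 0"
  obtains n :: nat where "n \<ge> 1" "Q (real n) z" "Nf z = real n"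
  using assms E_iff Q_Nf by (metis not_one_le_zero of_nat_eq_0_iff)

lemma zero_E: "0 \<in> hawaiian_earring"
  unfolding E_iff Q_def by (rule exI[of _ 1]) simp

lemma scale_E:
  assumes "z \<in> hawaiian_earring" "z \<noteq> 0" "Nf z = real n" "m \<ge> 1" "n \<ge> 1"
  shows "z * complex_of_real (real n / real m) \<in> hawaiian_earring
      \<and> Nf (z * complex_of_real (real n / real m)) = real m"
proof -
  have "Q (real n) z" using assms E_iff Q_Nf by (metis not_one_le_zero of_nat_eq_0_iff)
  then have "Q (real n / (real n / real m)) (z * complex_of_real (real n / real m))"
    using assms by (intro Q_scale) auto
  moreover have "real n / (real n / real m) = real m" using assms by auto
  ultimately have q: "Q (real m) (z * complex_of_real (real n / real m))" by simp
  then show ?thesis using assms E_iff Q_Nf[OF q] by auto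
qed

lemma Nf_locconst:
  assumes z: "z \<in> hawaiian_earring" "z \<noteq> 0"
  obtains r where "r > 0" "\<And>w. w \<in> hawaiian_earring \<Longrightarrow> dist w z < r \<Longrightarrow> Nf w = Nf z"
proof -
  have d: "(Re z)\<^sup>2 + (Im z)\<^sup>2 \<noteq> 0" using z(2) complex_eq_iff by (auto simp: power2_eq_square)
  have "isCont Nf z" unfolding Nf_def using d by (intro continuous_intros) auto
  then obtain d1 where d1: "d1 > 0" "\<And>w. dist w z < d1 \<Longrightarrow> dist (Nf w) (Nf z) < 1/2"
    unfolding continuous_at_eps_delta by (metis half_gt_zero_iff zero_less_one)
  obtain n :: nat where n: "Nf z = real n" using E_Nf[OF z] by blast
  show ?thesis
  proof (rule that[of "min d1 (cmod z)"])
    show "min d1 (cmod z) > 0" using d1 z by simp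
    fix w assume w: "w \<in> hawaiian_earring" "dist w z < min d1 (cmod z)"
    then have "w \<noteq> 0" by (auto simp: dist_norm)
    then obtain k :: nat where k: "Nf w = real k" using E_Nf[OF w(1)] by blast
    have "dist (Nf w) (Nf z) < 1/2" using d1 w by simp
    then have "\<bar>real k - real n\<bar> < 1/2" using k n by (simp add: dist_real_def)
    then have "k = n" by linarith
    then show "Nf w = Nf z" using k n by simp
  qed
qed

lemma cont_piece:
  fixes \<Phi> :: "real \<Rightarrow> complex \<Rightarrow> 'b::metric_space"
  assumes c0: "continuous (at 0 within hawaiian_earring) (\<lambda>w. \<Phi> (Nf w) w)"
    and cm: "\<And>m. continuous_on {w \<in> hawaiian_earring. Nf w = m} (\<Phi> m)"
  shows "continuous_on hawaiian_earring (\<lambda>w. \<Phi> (Nf w) w)"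
  unfolding continuous_on_eq_continuous_within
proof
  fix z assume zE: "z \<in> hawaiian_earring"
  show "continuous (at z within hawaiian_earring) (\<lambda>w. \<Phi> (Nf w) w)"
  proof (cases "z = 0")
    case True then show ?thesis using c0 by simp
  next
    case False
    obtain r where r: "r > 0" "\<And>w. w \<in> hawaiian_earring \<Longrightarrow> dist w z < r \<Longrightarrow> Nf w = Nf z"
      using Nf_locconst[OF zE False] by blast
    let ?S = "{w \<in> hawaiian_earring. Nf w = Nf z}"
    have "continuous (at z within ?S) (\<Phi> (Nf z))"
      using cm[of "Nf z"] zE unfolding continuous_on_eq_continuous_within by auto
    then have cz: "\<forall>e>0. \<exists>d>0. \<forall>w\<in>?S. dist w z < d \<longrightarrow> dist (\<Phi> (Nf z) w) (\<Phi> (Nf z) z) < e"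
      unfolding continuous_within_eps_delta .
    show ?thesis unfolding continuous_within_eps_delta
    proof (intro allI impI)
      fix e :: real assume "e > 0"
      then obtain d where d: "d > 0" "\<And>w. w\<in>?S \<Longrightarrow> dist w z < d \<Longrightarrow> dist (\<Phi> (Nf z) w) (\<Phi> (Nf z) z) < e"
        using cz by blast
      show "\<exists>d>0. \<forall>w\<in>hawaiian_earring. dist w z < d \<longrightarrow> dist (\<Phi> (Nf w) w) (\<Phi> (Nf z) z) < e"
      proof (intro exI[of _ "min d r"] conjI ballI impI)
        show "min d r > 0" using d r by simp
        fix w assume w: "w \<in> hawaiian_earring" "dist w z < min d r"
        then have "Nf w = Nf z" using r by simp
        then show "dist (\<Phi> (Nf w) w) (\<Phi> (Nf z) z) < e" using d w by simp
      qed
    qed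
  qed
qed



abbreviation "EE \<equiv> hawaiian_earring"

definition s1 :: "complex \<Rightarrow> complex" where
  "s1 w = w * complex_of_real (Nf w / (2 * Nf w - 1))"

definition s2 :: "complex \<Rightarrow> complex" where
  "s2 w = w * complex_of_real (1/2)"

lemma Nf0: "Nf 0 = 0" unfolding Nf_def by simp

lemma s1_E: assumes "w \<in> EE" "w \<noteq> 0"
  shows "s1 w \<in> EE \<and> s1 w \<noteq> 0 \<and> Nf (s1 w) = 2 * Nf w - 1"
proof -
  obtain n :: nat where n: "n \<ge> 1" "Nf w = real n" using E_Nf[OF assms] by metis
  have r: "real (2*n - 1) = 2 * real n - 1" using n by (simp add: of_nat_diff)
  define c where "c = real n / real (2*n-1)"
  have A: "w * complex_of_real c \<in> EE \<and> Nf (w * complex_of_real c) = real (2*n-1)"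
    unfolding c_def by (rule scale_E[OF assms n(2)]) (use n in auto)
  have p1: "real n > 0" "2*real n - 1 > 0" using n(1) by auto
  have c: "c \<noteq> 0" unfolding c_def r using p1 by simp
  have B: "w * complex_of_real c \<noteq> 0" using assms(2) c by (metis mult_eq_0_iff of_real_eq_0_iff)
  have "Nf w / (2 * Nf w - 1) = c" unfolding c_def n(2) r ..
  then have "s1 w = w * complex_of_real c" unfolding s1_def by (simp only:)
  then show ?thesis using A B r n(2) by simp
qed

lemma s1_0: "s1 0 = 0" unfolding s1_def by simp

lemma s2_E: assumes "w \<in> EE" "w \<noteq> 0"
  shows "s2 w \<in> EE \<and> Nf (s2 w) = 2 * Nf w"
proof -
  obtain n :: nat where n: "n \<ge> 1" "Nf w = real n" using E_Nf[OF assms] by metis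
  have "real n / real (2*n) = 1/2" using n by simp
  then show ?thesis using scale_E[OF assms n(2), of "2*n"] n unfolding s2_def by simp
qed

lemma s2_E': "w \<in> EE \<Longrightarrow> s2 w \<in> EE"
  using s2_E zero_E by (cases "w = 0") (auto simp: s2_def)

lemma s1_E': "w \<in> EE \<Longrightarrow> s1 w \<in> EE"
  using s1_E zero_E s1_0 by (cases "w = 0") auto

lemma s2_cont: "continuous_on EE s2"
  unfolding s2_def by (intro continuous_intros)

lemma s1_norm: assumes "w \<in> EE" shows "cmod (s1 w) \<le> cmod w"
proof (cases "w = 0")
  case True then show ?thesis by (simp add: s1_0)
next
  case False
  obtain n :: nat where n: "n \<ge> 1" "Nf w = real n" using E_Nf[OF assms False] by metis
  define c where "c = real n / (2 * real n - 1)"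
  have "\<bar>c\<bar> \<le> 1" unfolding c_def using n by auto
  then have le: "cmod w * \<bar>c\<bar> \<le> cmod w" using mult_left_le[OF _ norm_ge_zero] by blast
  have "s1 w = w * complex_of_real c" unfolding s1_def c_def n(2) ..
  then show ?thesis by (simp only: norm_mult norm_of_real le)
qed

lemma s1_cont: "continuous_on EE s1"
proof -
  have "continuous_on EE (\<lambda>w. (\<lambda>m w. w * complex_of_real (m / (2 * m - 1))) (Nf w) w)"
  proof (rule cont_piece)
    show "continuous (at 0 within EE) (\<lambda>w. (\<lambda>m w. w * complex_of_real (m / (2 * m - 1))) (Nf w) w)"
      unfolding continuous_within_eps_delta
      using s1_norm unfolding s1_def by (auto simp: dist_norm intro!: exI[of _ "_"]) (meson le_less_trans)
  qed (intro continuous_intros)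
  then show ?thesis unfolding s1_def by simp
qed

lemma argO: assumes w: "w \<in> EE" and o: "odd (nat \<lfloor>Nf w\<rfloor>)"
  shows "w * complex_of_real (2 * Nf w / (Nf w + 1)) \<in> EE \<and>
         cmod (w * complex_of_real (2 * Nf w / (Nf w + 1))) \<le> 2 * cmod w"
proof -
  have w0: "w \<noteq> 0" using o by (auto simp: Nf0)
  obtain n :: nat where n: "n \<ge> 1" "Nf w = real n" using E_Nf[OF w w0] by metis
  have "odd n" using o n(2) by simp
  then obtain k where k: "n = 2*k+1" by (metis oddE)
  have eq: "2 * Nf w / (Nf w + 1) = real n / real (k+1)" unfolding n(2) k by (simp add: field_simps)
  have A: "w * complex_of_real (real n / real (k+1)) \<in> EE" using scale_E[OF w w0 n(2), of "k+1"] n by simp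
  define c where "c = 2 * Nf w / (Nf w + 1)"
  have "\<bar>c\<bar> \<le> 2" unfolding c_def n(2) by (simp add: field_simps)
  then have "cmod w * \<bar>c\<bar> \<le> 2 * cmod w" by (metis mult.commute mult_right_mono norm_ge_zero)
  then have "cmod (w * complex_of_real c) \<le> 2 * cmod w" by (simp only: norm_mult norm_of_real)
  then show ?thesis using A unfolding eq c_def by simp
qed

lemma argE: assumes w: "w \<in> EE" and e: "even (nat \<lfloor>Nf w\<rfloor>)"
  shows "w * 2 \<in> EE"
proof (cases "w = 0")
  case True then show ?thesis using zero_E by simp
next
  case w0: False
  obtain n :: nat where n: "n \<ge> 1" "Nf w = real n" using E_Nf[OF w w0] by metis
  have "even n" using e n(2) by simp
  then obtain k where k: "n = 2*k" by (metis evenE)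
  have k1: "k \<ge> 1" using n k by simp
  have "real n / real k = 2" using k k1 by simp
  then show ?thesis using scale_E[OF w w0 n(2) k1] n by simp
qed

definition Fc :: "(complex \<Rightarrow> complex) \<Rightarrow> (complex \<Rightarrow> complex) \<Rightarrow> real \<Rightarrow> complex \<Rightarrow> complex" where
  "Fc f1 f2 m w = (if odd (nat \<lfloor>m\<rfloor>) then f1 (w * complex_of_real (2 * m / (m + 1))) else f2 (w * 2))"

lemma combine:
  fixes f1 f2 :: "complex \<Rightarrow> complex"
  assumes c1: "continuous_on EE f1" and c2: "continuous_on EE f2"
    and i1: "f1 ` EE \<subseteq> X" and i2: "f2 ` EE \<subseteq> X" and z1: "f1 0 = x" and z2: "f2 0 = x"
  shows "continuous_on EE (\<lambda>w. Fc f1 f2 (Nf w) w) \<and> (\<lambda>w. Fc f1 f2 (Nf w) w) ` EE \<subseteq> X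
     \<and> Fc f1 f2 (Nf 0) 0 = x \<and> (\<forall>w\<in>EE. Fc f1 f2 (Nf (s1 w)) (s1 w) = f1 w)
     \<and> (\<forall>w\<in>EE. Fc f1 f2 (Nf (s2 w)) (s2 w) = f2 w)"
proof (intro conjI ballI)
  show F0: "Fc f1 f2 (Nf 0) 0 = x" unfolding Fc_def Nf0 using z2 by simp
  show "(\<lambda>w. Fc f1 f2 (Nf w) w) ` EE \<subseteq> X"
    using argO argE i1 i2 unfolding Fc_def by (auto split: if_splits)
  show "continuous_on EE (\<lambda>w. Fc f1 f2 (Nf w) w)"
  proof (rule cont_piece)
    fix m
    show "continuous_on {w \<in> EE. Nf w = m} (Fc f1 f2 m)"
    proof (cases "odd (nat \<lfloor>m\<rfloor>)")
      case True
      then have eq: "Fc f1 f2 m = (\<lambda>w. f1 (w * complex_of_real (2 * m / (m + 1))))"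
        unfolding Fc_def by (simp add: fun_eq_iff)
      show ?thesis unfolding eq
      proof (rule continuous_on_compose2[OF c1])
        show "continuous_on {w \<in> EE. Nf w = m} (\<lambda>w. w * complex_of_real (2 * m / (m + 1)))"
          by (intro continuous_on_mult_right continuous_on_id)
        show "(\<lambda>w. w * complex_of_real (2 * m / (m + 1))) ` {w \<in> EE. Nf w = m} \<subseteq> EE"
          using argO True by auto
      qed
    next
      case False
      then have eq: "Fc f1 f2 m = (\<lambda>w. f2 (w * 2))"
        unfolding Fc_def by (simp add: fun_eq_iff)
      show ?thesis unfolding eq
        by (rule continuous_on_compose2[OF c2]) (use argE False in \<open>auto intro!: continuous_intros\<close>)
    qed
  next
    show "continuous (at 0 within EE) (\<lambda>w. Fc f1 f2 (Nf w) w)"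
      unfolding continuous_within_eps_delta F0
    proof (intro allI impI)
      fix e :: real assume e: "e > 0"
      have "continuous (at 0 within EE) f1" using c1 zero_E continuous_on_eq_continuous_within by blast
      then obtain d1 where d1: "d1 > 0" "\<And>w. w \<in> EE \<Longrightarrow> dist w 0 < d1 \<Longrightarrow> dist (f1 w) x < e"
        unfolding continuous_within_eps_delta z1 using e by metis
      have "continuous (at 0 within EE) f2" using c2 zero_E continuous_on_eq_continuous_within by blast
      then obtain d2 where d2: "d2 > 0" "\<And>w. w \<in> EE \<Longrightarrow> dist w 0 < d2 \<Longrightarrow> dist (f2 w) x < e"
        unfolding continuous_within_eps_delta z2 using e by metis
      show "\<exists>d>0. \<forall>w\<in>EE. dist w 0 < d \<longrightarrow> dist (Fc f1 f2 (Nf w) w) x < e"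
      proof (intro exI[of _ "min d1 d2 / 2"] conjI ballI impI)
        show "min d1 d2 / 2 > 0" using d1 d2 by simp
        fix w assume w: "w \<in> EE" "dist w 0 < min d1 d2 / 2"
        show "dist (Fc f1 f2 (Nf w) w) x < e"
        proof (cases "odd (nat \<lfloor>Nf w\<rfloor>)")
          case True
          note A = argO[OF w(1) True]
          have "dist (w * complex_of_real (2 * Nf w / (Nf w + 1))) 0 < d1" using A w(2) by simp
          then show ?thesis using d1(2)[OF conjunct1[OF A]] True unfolding Fc_def by simp
        next
          case False
          have A: "w * 2 \<in> EE" using argE[OF w(1)] False by simp
          have "dist (w * 2) 0 < d2" using w(2) by (simp add: norm_mult)
          then show ?thesis using d2(2)[OF A] False unfolding Fc_def by simp
        qed
      qed
    qed
  qed
next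
  fix w assume w: "w \<in> EE"
  show "Fc f1 f2 (Nf (s1 w)) (s1 w) = f1 w"
  proof (cases "w = 0")
    case True then show ?thesis unfolding Fc_def using s1_0 Nf0 z1 z2 by simp
  next
    case w0: False
    obtain n :: nat where n: "n \<ge> 1" "Nf w = real n" using E_Nf[OF w w0] by metis
    have S: "Nf (s1 w) = 2 * real n - 1" using s1_E[OF w w0] n by simp
    have e1: "2 * real n - 1 = real (2*n-1)" using n by (simp add: of_nat_diff)
    have "odd (2*n-1)" using n by presburger
    then have od: "odd (nat \<lfloor>Nf (s1 w)\<rfloor>)" unfolding S e1 floor_of_nat nat_int .
    define c1 where "c1 = real n / (2 * real n - 1)"
    define c2 where "c2 = 2 * (2 * real n - 1) / (2 * real n - 1 + 1)"
    have s1w: "s1 w = w * complex_of_real c1" unfolding s1_def c1_def n(2) ..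
    have "c1 * c2 = 1" unfolding c1_def c2_def using n by (simp add: field_simps)
    then have "s1 w * complex_of_real (2 * Nf (s1 w) / (Nf (s1 w) + 1)) = w"
      unfolding S unfolding c2_def[symmetric] unfolding s1w mult.assoc of_real_mult[symmetric] by simp
    then show ?thesis using od unfolding Fc_def by simp
  qed
next
  fix w assume w: "w \<in> EE"
  show "Fc f1 f2 (Nf (s2 w)) (s2 w) = f2 w"
  proof (cases "w = 0")
    case True then show ?thesis unfolding Fc_def using Nf0 z2 by (simp add: s2_def)
  next
    case w0: False
    obtain n :: nat where n: "n \<ge> 1" "Nf w = real n" using E_Nf[OF w w0] by metis
    have S: "Nf (s2 w) = real (2 * n)" using s2_E[OF w w0] n by simp
    have "even (nat \<lfloor>Nf (s2 w)\<rfloor>)" unfolding S floor_of_nat nat_int by simp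
    then show ?thesis unfolding Fc_def s2_def by simp
  qed
qed



lemma cls_agree:
  assumes p: "PP X a b p" and eq: "\<And>t. t \<in> {0..1} \<Longrightarrow> p t = q t"
    and c: "PP X x0 a c" and d: "PP X b x0 d"
  shows "path_class X (c +++ (p +++ d)) = path_class X (c +++ (q +++ d))"
proof -
  have hq: "homotopic_paths X p q" using p eq unfolding PP_def by (intro homotopic_paths_eq) auto
  show ?thesis
    by (rule cls_eq[OF hp_join[OF hp_refl[OF c] hp_join[OF hq hp_refl[OF d] p d] c PP_join[OF p d]]])
qed

lemma PP_img: "PP E a b g \<Longrightarrow> t \<in> {0..1} \<Longrightarrow> g t \<in> E"
  unfolding PP_def path_image_def by auto

theorem mainTheorem14:
  fixes X :: "complex set" and x0 x :: complex
    and H1 H2 :: "(real \<Rightarrow> complex) set set"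
  assumes "planar_peano_continuum X" and "x0 \<in> X"
    and "pseudo_HE_subgroup X x0 H1" and "pseudo_HE_subgroup X x0 H2"
    and "wedge_point X x0 H1 x" and "wedge_point X x0 H2 x"
  shows "HE_equiv X x0 H1 H2"
proof -
  let ?G = "fundamental_group X x0"
  obtain \<psi>1 f1 \<alpha> where \<psi>1: "\<psi>1 ` carrier HE_group = H1" and c1: "continuous_on EE f1"
    and i1: "f1 ` EE \<subseteq> X" and z1: "f1 0 = x" and al: "PP X x x0 \<alpha>"
    and e1: "\<forall>c\<in>carrier HE_group. \<psi>1 c = basepoint_change X \<alpha> (induced_map X f1 c)"
    using assms(5) unfolding wedge_point_def PP_def by blast
  obtain \<psi>2 f2 \<beta> where \<psi>2: "\<psi>2 ` carrier HE_group = H2" and c2: "continuous_on EE f2"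
    and i2: "f2 ` EE \<subseteq> X" and z2: "f2 0 = x" and be: "PP X x x0 \<beta>"
    and e2: "\<forall>c\<in>carrier HE_group. \<psi>2 c = basepoint_change X \<beta> (induced_map X f2 c)"
    using assms(6) unfolding wedge_point_def PP_def by blast
  define F where "F = (\<lambda>w. Fc f1 f2 (Nf w) w)"
  note comb = combine[OF c1 c2 i1 i2 z1 z2, folded F_def]
  have cF: "continuous_on EE F" and iF: "F ` EE \<subseteq> X" and F0: "F 0 = x"
    and Fs1: "\<And>w. w \<in> EE \<Longrightarrow> F (s1 w) = f1 w" and Fs2: "\<And>w. w \<in> EE \<Longrightarrow> F (s2 w) = f2 w"
    using comb unfolding F_def by auto
  define \<psi> where "\<psi> = (\<lambda>c. basepoint_change X \<alpha> (induced_map X F c))"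
  have alF: "PP X (F 0) x0 \<alpha>" using al F0 by simp
  have al1: "PP X (f1 0) x0 \<alpha>" using al z1 by simp
  have be2: "PP X (f2 0) x0 \<beta>" using be z2 by simp
  have hom: "\<psi> \<in> hom HE_group ?G" unfolding \<psi>_def by (rule psi_hom[OF zero_E cF iF alF])
  have gE: "group HE_group" by (rule group_fg[OF zero_E])
  have gG: "group ?G" by (rule group_fg[OF assms(2)])
  have gh: "group_hom HE_group ?G \<psi>"
    unfolding group_hom_def group_hom_axioms_def using gE gG hom by simp
  define H where "H = \<psi> ` carrier HE_group"
  have sub: "subgroup H ?G" unfolding H_def by (rule group_hom.img_is_subgroup[OF gh])
  have s1E: "s1 ` EE \<subseteq> EE" using s1_E' by blast
  have s2E: "s2 ` EE \<subseteq> EE" using s2_E' by blast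
  have s20: "s2 0 = 0" unfolding s2_def by simp
  have PPs1: "PP EE 0 0 (s1 \<circ> g)" if "PP EE 0 0 g" for g
    using PP_comp[OF that s1_cont s1E] s1_0 by simp
  have PPs2: "PP EE 0 0 (s2 \<circ> g)" if "PP EE 0 0 g" for g
    using PP_comp[OF that s2_cont s2E] s20 by simp
  have psi_g: "\<psi> (path_class EE g) = path_class X (reversepath \<alpha> +++ ((F \<circ> g) +++ \<alpha>))"
    if "PP EE 0 0 g" for g
    unfolding \<psi>_def by (rule psi_cls[OF cF iF that alF])
  have H1H: "H1 \<subseteq> H"
  proof
    fix h assume "h \<in> H1"
    then obtain c where c: "c \<in> carrier HE_group" and h: "h = \<psi>1 c" using \<psi>1 by blast
    then obtain g where g: "PP EE 0 0 g" and cg: "c = path_class EE g" unfolding carrier_fg by blast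
    have "h = path_class X (reversepath \<alpha> +++ ((f1 \<circ> g) +++ \<alpha>))"
      using e1 c h cg psi_cls[OF c1 i1 g al1] by simp
    also have "\<dots> = path_class X (reversepath \<alpha> +++ ((F \<circ> (s1 \<circ> g)) +++ \<alpha>))"
      by (rule cls_agree[OF PP_comp[OF g c1 i1]]) (use Fs1 PP_img[OF g] al z1 in \<open>auto intro: PP_rev\<close>)
    also have "\<dots> = \<psi> (path_class EE (s1 \<circ> g))" using psi_g[OF PPs1[OF g]] by simp
    finally show "h \<in> H" unfolding H_def carrier_fg using PPs1[OF g] by blast
  qed
  define gg where "gg = path_class X (reversepath \<alpha> +++ \<beta>)"
  have ra: "PP X x0 x (reversepath \<alpha>)" and rb: "PP X x0 x (reversepath \<beta>)" using al be PP_rev by auto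
  have ab: "PP X x0 x0 (reversepath \<alpha> +++ \<beta>)" using PP_join[OF ra be] .
  have ba: "PP X x0 x0 (reversepath \<beta> +++ \<alpha>)" using PP_join[OF rb al] .
  have ggG: "gg \<in> carrier ?G" unfolding gg_def carrier_fg using ab by blast
  have bbG: "path_class X (reversepath \<beta> +++ \<alpha>) \<in> carrier ?G" unfolding carrier_fg using ba by blast
  have "path_class X (reversepath \<beta> +++ \<alpha>) \<otimes>\<^bsub>?G\<^esub> gg = \<one>\<^bsub>?G\<^esub>"
    unfolding gg_def mult_fg[OF ba ab] one_fg
    apply (rule cls_eq)
    apply (rule hp_trans[OF hp_cancel[OF rb al ra be hp_rinv[OF al]]])
    using hp_linv[OF be] be unfolding PP_def by simp
  then have inv: "inv\<^bsub>?G\<^esub> gg = path_class X (reversepath \<beta> +++ \<alpha>)"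
    using group.inv_equality[OF gG _ ggG bbG] by simp
  have H2H: "(\<lambda>h. gg \<otimes>\<^bsub>?G\<^esub> h \<otimes>\<^bsub>?G\<^esub> inv\<^bsub>?G\<^esub> gg) ` H2 \<subseteq> H"
  proof
    fix k assume "k \<in> (\<lambda>h. gg \<otimes>\<^bsub>?G\<^esub> h \<otimes>\<^bsub>?G\<^esub> inv\<^bsub>?G\<^esub> gg) ` H2"
    then obtain c where c: "c \<in> carrier HE_group" and k: "k = gg \<otimes>\<^bsub>?G\<^esub> \<psi>2 c \<otimes>\<^bsub>?G\<^esub> inv\<^bsub>?G\<^esub> gg"
      using \<psi>2 by blast
    then obtain g where g: "PP EE 0 0 g" and cg: "c = path_class EE g" unfolding carrier_fg by blast
    have fg: "PP X x x (f2 \<circ> g)" using PP_comp[OF g c2 i2] z2 by simp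
    have p2: "PP X x0 x0 (reversepath \<beta> +++ ((f2 \<circ> g) +++ \<beta>))"
      by (rule PP_join[OF rb PP_join[OF fg be]])
    have "\<psi>2 c = path_class X (reversepath \<beta> +++ ((f2 \<circ> g) +++ \<beta>))"
      using e2 c cg psi_cls[OF c2 i2 g be2] by simp
    then have "k = gg \<otimes>\<^bsub>?G\<^esub> path_class X (reversepath \<beta> +++ ((f2 \<circ> g) +++ \<beta>))
                 \<otimes>\<^bsub>?G\<^esub> path_class X (reversepath \<beta> +++ \<alpha>)" using k inv by simp
    also have "\<dots> = path_class X (((reversepath \<alpha> +++ \<beta>) +++ (reversepath \<beta> +++ ((f2 \<circ> g) +++ \<beta>)))
                  +++ (reversepath \<beta> +++ \<alpha>))"
      unfolding gg_def mult_fg[OF ab p2] mult_fg[OF PP_join[OF ab p2] ba] ..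
    also have "\<dots> = path_class X (reversepath \<alpha> +++ ((f2 \<circ> g) +++ \<alpha>))"
      by (rule cls_eq[OF hp_conj[OF ra be rb al fg hp_rinv[OF be] hp_rinv[OF al]]])
    also have "\<dots> = path_class X (reversepath \<alpha> +++ ((F \<circ> (s2 \<circ> g)) +++ \<alpha>))"
      by (rule cls_agree[OF fg]) (use Fs2 PP_img[OF g] ra al in auto)
    also have "\<dots> = \<psi> (path_class EE (s2 \<circ> g))" using psi_g[OF PPs2[OF g]] by simp
    finally show "k \<in> H" unfolding H_def carrier_fg using PPs2[OF g] by blast
  qed
  have "uncountable H1" using assms(3) unfolding pseudo_HE_subgroup_def by blast
  then have unc: "uncountable H" using H1H countable_subset by blast
  have "pseudo_HE_subgroup X x0 H"
    unfolding pseudo_HE_subgroup_def using sub unc hom H_def by blast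
  then show ?thesis unfolding HE_equiv_def using ggG H1H H2H by blast
qed

end
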